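(* Let $m,n$ be positive integers and $x>2$ real. Define $\alpha_j>0$ ($1\le j\le n$) and $\beta_k>0$ ($1\le k\le m$) by $$\cosh\alpha_j+\cos\frac{\pi j}{n+1}=x=\cosh\beta_k+\cos\frac{\pi k}{m+1}.$$ Then $$\prod_{j=1}^n\frac{\sinh\big((m+1)\alpha_j\big)}{\sinh\alpha_j}=\prod_{k=1}^m\frac{\sinh\big((n+1)\beta_k\big)}{\sinh\beta_k}.$$ *)

theory Defs
  imports Complex_Main
begin

end

theory Submission
  imports Defs "HOL-Computational_Algebra.Polynomial"
begin

fun U :: "nat \<Rightarrow> real poly" where
  "U 0 = 1"
| "U (Suc 0) = [:0,2:]"
| "U (Suc (Suc n)) = [:0,2:] * U (Suc n) - U n"

lemma U_sinh: "poly (U m) (cosh a) * sinh a = sinh (real (m+1) * a)"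
proof (induction m rule: U.induct)
  case 1 then show ?case by simp
next
  case 2 then show ?case by (simp add: sinh_double)
next
  case (3 n)
  have e1: "sinh (real (n+3) * a) = sinh (real (n+2) * a + a)" by (simp add: algebra_simps)
  have e2: "sinh (real (n+1) * a) = sinh (real (n+2) * a - a)" by (simp add: algebra_simps)
  have "sinh (real (n+3) * a) + sinh (real (n+1) * a) = 2 * cosh a * sinh (real (n+2) * a)"
    unfolding e1 e2 sinh_add sinh_diff by (simp add: algebra_simps)
  with 3 show ?case by (simp add: algebra_simps)
qed

lemma U_sin: "poly (U m) (cos a) * sin a = sin (real (m+1) * a)"
proof (induction m rule: U.induct)
  case 1 then show ?case by simp
next
  case 2 then show ?case by (simp add: sin_double)
next
  case (3 n)
  have e1: "sin (real (n+3) * a) = sin (real (n+2) * a + a)" by (simp add: algebra_simps)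
  have e2: "sin (real (n+1) * a) = sin (real (n+2) * a - a)" by (simp add: algebra_simps)
  have "sin (real (n+3) * a) + sin (real (n+1) * a) = 2 * cos a * sin (real (n+2) * a)"
    unfolding e1 e2 sin_add sin_diff by (simp add: algebra_simps)
  with 3 show ?case by (simp add: algebra_simps)
qed

lemma U_deg: "degree (U m) \<le> m \<and> coeff (U m) m = 2 ^ m"
proof (induction m rule: U.induct)
  case 1 then show ?case by simp
next
  case 2 then show ?case by simp
next
  case (3 n)
  have d1: "degree ([:0,2:] * U (Suc n)) \<le> Suc (Suc n)"
    using 3 degree_mult_le[of "[:0,2::real:]" "U (Suc n)"] by simp
  have d2: "degree (U n) \<le> Suc (Suc n)" using 3 by simp
  have deg: "degree (U (Suc (Suc n))) \<le> Suc (Suc n)"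
    using degree_diff_le[OF d1 d2] by simp
  have c0: "coeff (U n) (Suc (Suc n)) = 0" using 3 by (intro coeff_eq_0) simp
  have "coeff ([:0,2:] * U (Suc n)) (Suc (Suc n)) = 2 * coeff (U (Suc n)) (Suc n)"
    by (simp add: mult_pCons_left)
  with 3 c0 deg show ?case by simp
qed

lemma U_factor:
  "U m = smult (2^m) (\<Prod>k\<in>{1..m}. [:- cos (pi * real k / real (m+1)), 1:])"
proof -
  define c where "c k = cos (pi * real k / real (m+1))" for k
  define q where "q = smult (2^m) (\<Prod>k\<in>{1..m}. [:- c k, 1:])"
  have degq: "degree (\<Prod>k\<in>{1..m}. [:- c k, 1:]) = m"
    by (subst degree_prod_eq_sum_degree) auto
  have lcq: "lead_coeff (\<Prod>k\<in>{1..m}. [:- c k, 1:]) = 1"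
    by (simp add: lead_coeff_prod)
  have inj: "inj_on c {1..m}"
  proof (rule inj_onI)
    fix x y assume xy: "x \<in> {1..m}" "y \<in> {1..m}" "c x = c y"
    have "pi * real x / real (m+1) = pi * real y / real (m+1)"
    proof (rule cos_inj_pi)
      have "pi * real x \<le> pi * real (m+1)" "pi * real y \<le> pi * real (m+1)"
        using xy pi_gt_zero by (intro mult_left_mono; simp)+
      then show "pi * real x / real (m+1) \<le> pi" "pi * real y / real (m+1) \<le> pi"
        by (simp_all add: divide_le_eq mult.commute)
    qed (use xy in \<open>auto simp: c_def\<close>)
    then show "x = y" using pi_gt_zero by (simp add: field_simps)
  qed
  have "U m = q"
  proof (rule poly_eqI_degree_lead_coeff[of _ m _ "c ` {1..m}"])
    show "coeff (U m) m = coeff q m" using U_deg[of m] lcq degq by (simp add: q_def)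
    show "m \<le> card (c ` {1..m})" using card_image[OF inj] by simp
    show "degree (U m) \<le> m" using U_deg by blast
    show "degree q \<le> m" using degq by (simp add: q_def)
    fix z assume "z \<in> c ` {1..m}"
    then obtain k where k: "k \<in> {1..m}" "z = c k" by auto
    define t where "t = pi * real k / real (m+1)"
    have "pi * real k < pi * real (m+1)" using k pi_gt_zero by simp
    then have "sin t > 0" unfolding t_def using k pi_gt_zero
      by (intro sin_gt_zero) (auto simp: divide_less_eq mult.commute)
    moreover have "sin (real (m+1) * t) = 0" unfolding t_def
      by (simp add: sin_npi mult.commute)
    ultimately have "poly (U m) z = 0" using U_sin[of m t] k by (simp add: c_def t_def)
    moreover have "poly q z = 0" unfolding q_def using k
      by (auto simp: poly_prod intro!: prod_zero)
    ultimately show "poly (U m) z = poly q z" by simp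
  qed
  then show ?thesis by (simp add: q_def c_def)
qed

lemma ratio: "a \<noteq> 0 \<Longrightarrow> sinh (real (m+1) * a) / sinh a
   = 2^m * (\<Prod>k\<in>{1..m}. (cosh a - cos (pi * real k / real (m+1))))"
proof -
  assume a: "a \<noteq> 0"
  have "sinh a \<noteq> 0" using a by simp
  then have "sinh (real (m+1) * a) / sinh a = poly (U m) (cosh a)"
    using U_sinh[of m a] by (simp add: field_simps)
  also have "\<dots> = 2^m * (\<Prod>k\<in>{1..m}. (cosh a - cos (pi * real k / real (m+1))))"
    by (subst U_factor) (simp add: poly_prod)
  finally show ?thesis .
qed

theorem mainTheorem11:
  fixes m n :: nat and x :: real and \<alpha> \<beta> :: "nat \<Rightarrow> real"
  assumes "m \<ge> 1" and "n \<ge> 1" and "x > 2"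
    and "\<And>j. 1 \<le> j \<Longrightarrow> j \<le> n \<Longrightarrow> \<alpha> j > 0 \<and> cosh (\<alpha> j) + cos (pi * real j / real (n + 1)) = x"
    and "\<And>k. 1 \<le> k \<Longrightarrow> k \<le> m \<Longrightarrow> \<beta> k > 0 \<and> cosh (\<beta> k) + cos (pi * real k / real (m + 1)) = x"
  shows "(\<Prod>j=1..n. sinh (real (m + 1) * \<alpha> j) / sinh (\<alpha> j))
       = (\<Prod>k=1..m. sinh (real (n + 1) * \<beta> k) / sinh (\<beta> k))"
proof -
  define a where "a j = cos (pi * real j / real (n+1))" for j
  define b where "b k = cos (pi * real k / real (m+1))" for k
  have L: "(\<Prod>j=1..n. sinh (real (m + 1) * \<alpha> j) / sinh (\<alpha> j))
     = (\<Prod>j=1..n. (2::real)^m * (\<Prod>k=1..m. (x - a j - b k)))"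
  proof (rule prod.cong[OF refl])
    fix j assume j: "j \<in> {1..n}"
    have "\<alpha> j \<noteq> 0" and h: "cosh (\<alpha> j) = x - a j" using assms(4)[of j] j by (auto simp: a_def)
    show "sinh (real (m + 1) * \<alpha> j) / sinh (\<alpha> j) = ((2::real)^m * (\<Prod>k=1..m. (x - a j - b k)))"
    proof -
      have "sinh (real (m + 1) * \<alpha> j) / sinh (\<alpha> j) = 2^m * (\<Prod>k=1..m. (cosh (\<alpha> j) - b k))"
        unfolding b_def by (rule ratio) fact
      then show ?thesis using h by simp
    qed
  qed
  have R: "(\<Prod>k=1..m. sinh (real (n + 1) * \<beta> k) / sinh (\<beta> k))
     = (\<Prod>k=1..m. (2::real)^n * (\<Prod>j=1..n. (x - b k - a j)))"
  proof (rule prod.cong[OF refl])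
    fix k assume k: "k \<in> {1..m}"
    have "\<beta> k \<noteq> 0" and h: "cosh (\<beta> k) = x - b k" using assms(5)[of k] k by (auto simp: b_def)
    show "sinh (real (n + 1) * \<beta> k) / sinh (\<beta> k) = ((2::real)^n * (\<Prod>j=1..n. (x - b k - a j)))"
    proof -
      have "sinh (real (n + 1) * \<beta> k) / sinh (\<beta> k) = 2^n * (\<Prod>j=1..n. (cosh (\<beta> k) - a j))"
        unfolding a_def by (rule ratio) fact
      then show ?thesis using h by simp
    qed
  qed
  have sw: "(\<Prod>j=1..n. \<Prod>k=1..m. (x - a j - b k)) = (\<Prod>k=1..m. \<Prod>j=1..n. (x - b k - a j))"
    by (subst prod.swap) (simp add: algebra_simps)
  show ?thesis unfolding L R prod.distrib
    using sw by (simp add: power_mult[symmetric] mult.commute)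
qed

end
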